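(* The 1D aTAM is not intrinsically universal: there is no finite 1D tile set $U$ (and temperature $\tau'$) with computable functions $\mathcal{R},S$ such that every 1D aTAM system $\mathcal{T}$ is simulated, at some scale $m$ under $\mathcal{R}(\mathcal{T})$, by the 1D aTAM system $(U,S(\mathcal{T}),\tau')$.
   Context: 1D aTAM: a tile type has a west glue and an east glue, each a pair (finite string label, nonnegative integer strength); a tile set is a finite set of tile types. Assemblies are partial functions $\alpha:\mathbb{Z}\dashrightarrow T$ whose domain is a nonempty interval; adjacent tiles interact if the east glue of the left tile equals the west glue of the right tile with positive strength; $\alpha$ is $\tau$-stable if every cut between consecutive tiles has interaction strength $\ge\tau$. A system $\mathcal{T}=(T,\sigma,\tau)$ has finite $\tau$-stable seed $\sigma$; growth proceeds by single $\tau$-stable tile additions (finite or infinite assembly sequences, result = limit); $\mathcal{A}[\mathcal{T}]$ are the producible assemblies and $\mathcal{A}_\Box[\mathcal{T}]$ the producible ones to which no tile can be added. Simulation: an $m$-block over $S$ is a partial function $\{0,\dots,m-1\}\dashrightarrow S$; $\alpha^m_x$ is $i\mapsto\alpha(mx+i)$. A partial $R$ from $m$-blocks to $T$ is valid if $\alpha\sqsubseteq\beta$, $\alpha\in\mathrm{dom}R$ imply $R(\beta)=R(\alpha)$; $R^*(\alpha')$ is $x\mapsto R(\alpha'^m_x)$. $\alpha'$ maps cleanly if each nonempty block at $x$ has $x$ or $x\pm1$ in $\mathrm{dom}\,R^*(\alpha')$ (or there is at most one nonempty block). $\mathcal{S}$ simulates $\mathcal{T}$ under $R$ if: (i) $R^*$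 maps $\mathcal{A}[\mathcal{S}]$ onto $\mathcal{A}[\mathcal{T}]$ and $\mathcal{A}_\Box[\mathcal{S}]$ onto $\mathcal{A}_\Box[\mathcal{T}]$, all producible assemblies mapping cleanly; (ii) producible $\alpha'\to^\mathcal{S}\beta'$ implies $R^*(\alpha')\to^\mathcal{T}R^*(\beta')$; (iii) for every $\alpha\in\mathcal{A}[\mathcal{T}]$ there is $\Pi\subset\mathcal{A}[\mathcal{S}]$ with $R^*=\alpha$ on $\Pi$ such that for every producible $\beta$ with $\alpha\to^\mathcal{T}\beta$: each $\alpha'\in\Pi$ produces some $\beta'$ with $R^*(\beta')=\beta$, and whenever producible $\alpha''\to^\mathcal{S}\beta'$ with $R^*(\alpha'')=\alpha$, $R^*(\beta')=\beta$, some $\alpha'\in\Pi$ produces $\alpha''$. *)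

theory Defs
  imports Main "HOL-Library.Nat_Bijection"
begin

(* a glue: (label, strength); a tile type: (west glue, east glue) *)
type_synonym glue = "string \<times> nat"
type_synonym tile = "glue \<times> glue"
type_synonym assembly = "int \<Rightarrow> tile option"
type_synonym block = "nat \<Rightarrow> tile option"
type_synonym system = "tile set \<times> assembly \<times> nat"

definition west :: "tile \<Rightarrow> glue" where "west t = fst t"
definition east :: "tile \<Rightarrow> glue" where "east t = snd t"

definition strength :: "tile \<Rightarrow> tile \<Rightarrow> nat" where
  "strength a b = (if east a = west b \<and> snd (east a) > 0 then snd (east a) else 0)"

definition is_interval :: "int set \<Rightarrow> bool" where
  "is_interval D \<longleftrightarrow> (\<forall>x y z. x \<in> D \<longrightarrow> z \<in> D \<longrightarrow> x \<le> y \<longrightarrow> y \<le> z \<longrightarrow> y \<in> D)"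

definition is_assembly :: "assembly \<Rightarrow> bool" where
  "is_assembly \<alpha> \<longleftrightarrow> dom \<alpha> \<noteq> {} \<and> is_interval (dom \<alpha>)"

definition stable :: "nat \<Rightarrow> assembly \<Rightarrow> bool" where
  "stable \<tau> \<alpha> \<longleftrightarrow> (\<forall>x. x \<in> dom \<alpha> \<longrightarrow> x + 1 \<in> dom \<alpha> \<longrightarrow>
      \<tau> \<le> strength (the (\<alpha> x)) (the (\<alpha> (x + 1))))"

definition is_system :: "tile set \<Rightarrow> assembly \<Rightarrow> nat \<Rightarrow> bool" where
  "is_system T \<sigma> \<tau> \<longleftrightarrow> finite T \<and> 0 < \<tau> \<and> is_assembly \<sigma> \<and> finite (dom \<sigma>)
     \<and> ran \<sigma> \<subseteq> T \<and> stable \<tau> \<sigma>"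

definition step :: "tile set \<Rightarrow> nat \<Rightarrow> assembly \<Rightarrow> assembly \<Rightarrow> bool" where
  "step T \<tau> \<alpha> \<beta> \<longleftrightarrow> (\<exists>x t. t \<in> T \<and> \<alpha> x = None \<and> \<beta> = \<alpha>(x \<mapsto> t)
       \<and> is_assembly \<beta> \<and> stable \<tau> \<beta>)"

definition seq_limit :: "(nat \<Rightarrow> assembly) \<Rightarrow> assembly \<Rightarrow> bool" where
  "seq_limit f \<beta> \<longleftrightarrow> (\<forall>x. (\<beta> x = None \<longleftrightarrow> (\<forall>i. f i x = None))
       \<and> (\<forall>i. f i x \<noteq> None \<longrightarrow> \<beta> x = f i x))"

definition produces :: "tile set \<Rightarrow> nat \<Rightarrow> assembly \<Rightarrow> assembly \<Rightarrow> bool" where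
  "produces T \<tau> \<alpha> \<beta> \<longleftrightarrow> (step T \<tau>)\<^sup>*\<^sup>* \<alpha> \<beta> \<or>
     (\<exists>f. f 0 = \<alpha> \<and> (\<forall>i. step T \<tau> (f i) (f (Suc i))) \<and> seq_limit f \<beta>)"

definition prodA :: "tile set \<Rightarrow> assembly \<Rightarrow> nat \<Rightarrow> assembly set" where
  "prodA T \<sigma> \<tau> = {\<alpha>. produces T \<tau> \<sigma> \<alpha>}"

definition termA :: "tile set \<Rightarrow> assembly \<Rightarrow> nat \<Rightarrow> assembly set" where
  "termA T \<sigma> \<tau> = {\<alpha> \<in> prodA T \<sigma> \<tau>. \<not> (\<exists>\<beta>. step T \<tau> \<alpha> \<beta>)}"

definition mblock :: "nat \<Rightarrow> assembly \<Rightarrow> int \<Rightarrow> block" where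
  "mblock m \<alpha> x = (\<lambda>i. if i < m then \<alpha> (int m * x + int i) else None)"

definition is_mblock :: "nat \<Rightarrow> tile set \<Rightarrow> block \<Rightarrow> bool" where
  "is_mblock m S b \<longleftrightarrow> dom b \<subseteq> {..<m} \<and> ran b \<subseteq> S"

definition valid_rep :: "nat \<Rightarrow> tile set \<Rightarrow> (block \<rightharpoonup> tile) \<Rightarrow> bool" where
  "valid_rep m S R \<longleftrightarrow> (\<forall>a b. is_mblock m S a \<longrightarrow> is_mblock m S b \<longrightarrow> a \<subseteq>\<^sub>m b
      \<longrightarrow> a \<in> dom R \<longrightarrow> R b = R a)"

definition Rstar :: "nat \<Rightarrow> (block \<rightharpoonup> tile) \<Rightarrow> assembly \<Rightarrow> assembly" where
  "Rstar m R \<alpha> = (\<lambda>x. R (mblock m \<alpha> x))"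

definition maps_cleanly :: "nat \<Rightarrow> (block \<rightharpoonup> tile) \<Rightarrow> assembly \<Rightarrow> bool" where
  "maps_cleanly m R \<alpha> \<longleftrightarrow>
     (\<forall>x. mblock m \<alpha> x \<noteq> Map.empty \<longrightarrow> (\<exists>u\<in>{-1, 0, 1}. x + u \<in> dom (Rstar m R \<alpha>)))
   \<or> (\<forall>x y. mblock m \<alpha> x \<noteq> Map.empty \<longrightarrow> mblock m \<alpha> y \<noteq> Map.empty \<longrightarrow> x = y)"

definition simulates ::
  "tile set \<Rightarrow> assembly \<Rightarrow> nat \<Rightarrow> tile set \<Rightarrow> assembly \<Rightarrow> nat \<Rightarrow> nat \<Rightarrow> (block \<rightharpoonup> tile) \<Rightarrow> bool"
where
  "simulates S \<sigma>' \<tau>' T \<sigma> \<tau> m R \<longleftrightarrow>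
     0 < m \<and> valid_rep m S R
   \<comment> \<open>(i)\<close>
   \<and> Rstar m R ` prodA S \<sigma>' \<tau>' = prodA T \<sigma> \<tau>
   \<and> Rstar m R ` termA S \<sigma>' \<tau>' = termA T \<sigma> \<tau>
   \<and> (\<forall>\<alpha>'\<in>prodA S \<sigma>' \<tau>'. maps_cleanly m R \<alpha>')
   \<comment> \<open>(ii)\<close>
   \<and> (\<forall>\<alpha>'\<in>prodA S \<sigma>' \<tau>'. \<forall>\<beta>'\<in>prodA S \<sigma>' \<tau>'.
        produces S \<tau>' \<alpha>' \<beta>' \<longrightarrow> produces T \<tau> (Rstar m R \<alpha>') (Rstar m R \<beta>'))
   \<comment> \<open>(iii)\<close>
   \<and> (\<forall>\<alpha>\<in>prodA T \<sigma> \<tau>. \<exists>\<Pi>. \<Pi> \<subseteq> prodA S \<sigma>' \<tau>' \<and> (\<forall>\<alpha>'\<in>\<Pi>. Rstar m R \<alpha>' = \<alpha>) \<and>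
        (\<forall>\<beta>\<in>prodA T \<sigma> \<tau>. produces T \<tau> \<alpha> \<beta> \<longrightarrow>
           (\<forall>\<alpha>'\<in>\<Pi>. \<exists>\<beta>'. produces S \<tau>' \<alpha>' \<beta>' \<and> Rstar m R \<beta>' = \<beta>) \<and>
           (\<forall>\<alpha>'' \<beta>'. \<alpha>'' \<in> prodA S \<sigma>' \<tau>' \<and> produces S \<tau>' \<alpha>'' \<beta>'
               \<and> Rstar m R \<alpha>'' = \<alpha> \<and> Rstar m R \<beta>' = \<beta>
               \<longrightarrow> (\<exists>\<alpha>'\<in>\<Pi>. produces S \<tau>' \<alpha>' \<alpha>''))))"

datatype recf = Zero | Succ | Proj nat | Comp recf "recf list" | Prim recf recf | Mn recf

inductive reval :: "recf \<Rightarrow> nat list \<Rightarrow> nat \<Rightarrow> bool" where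
  "reval Zero xs 0"
| "reval Succ (x # xs) (Suc x)"
| "i < length xs \<Longrightarrow> reval (Proj i) xs (xs ! i)"
| "length ys = length gs \<Longrightarrow> (\<forall>i<length gs. reval (gs ! i) xs (ys ! i)) \<Longrightarrow>
     reval f ys z \<Longrightarrow> reval (Comp f gs) xs z"
| "reval f xs z \<Longrightarrow> reval (Prim f g) (0 # xs) z"
| "reval (Prim f g) (n # xs) y \<Longrightarrow> reval g (y # n # xs) z \<Longrightarrow> reval (Prim f g) (Suc n # xs) z"
| "reval f (n # xs) 0 \<Longrightarrow> (\<forall>k<n. \<exists>y. 0 < y \<and> reval f (k # xs) y) \<Longrightarrow> reval (Mn f) xs n"

definition rcomputable :: "(nat \<Rightarrow> nat) \<Rightarrow> bool" where
  "rcomputable g \<longleftrightarrow> (\<exists>p. \<forall>x. reval p [x] (g x))"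

definition computable_on :: "('a \<Rightarrow> bool) \<Rightarrow> ('a \<Rightarrow> nat) \<Rightarrow> ('b \<Rightarrow> nat) \<Rightarrow> ('a \<Rightarrow> 'b) \<Rightarrow> bool" where
  "computable_on P ein eout F \<longleftrightarrow> (\<exists>g. rcomputable g \<and> (\<forall>x. P x \<longrightarrow> g (ein x) = eout (F x)))"

definition enc_glue :: "glue \<Rightarrow> nat" where
  "enc_glue g = prod_encode (list_encode (map of_char (fst g)), snd g)"

definition enc_tile :: "tile \<Rightarrow> nat" where
  "enc_tile t = prod_encode (enc_glue (fst t), enc_glue (snd t))"

definition enc_tileset :: "tile set \<Rightarrow> nat" where
  "enc_tileset T = set_encode (enc_tile ` T)"

definition enc_asm :: "assembly \<Rightarrow> nat" where
  "enc_asm \<alpha> = set_encode ((\<lambda>x. prod_encode (int_encode x, enc_tile (the (\<alpha> x)))) ` dom \<alpha>)"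

definition enc_system :: "system \<Rightarrow> nat" where
  "enc_system s = (case s of (T, \<sigma>, \<tau>) \<Rightarrow> prod_encode (enc_tileset T, prod_encode (enc_asm \<sigma>, \<tau>)))"

definition enc_block :: "block \<Rightarrow> nat" where
  "enc_block b = set_encode ((\<lambda>i. prod_encode (i, enc_tile (the (b i)))) ` dom b)"

(* a representation function at scale m, given by its (finite) table on m-blocks over S *)
definition enc_rep :: "tile set \<Rightarrow> nat \<times> (block \<rightharpoonup> tile) \<Rightarrow> nat" where
  "enc_rep S r = (case r of (m, R) \<Rightarrow> prod_encode (m, set_encode
      {prod_encode (enc_block b, enc_tile t) | b t. is_mblock m S b \<and> R b = Some t}))"

definition valid_system :: "system \<Rightarrow> bool" where
  "valid_system s = (case s of (T, \<sigma>, \<tau>) \<Rightarrow> is_system T \<sigma> \<tau>)"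

end

theory Submission
  imports Defs
begin


definition ctile :: "nat \<Rightarrow> tile" where
  "ctile i = ((replicate i CHR ''a'', 1), (replicate (Suc i) CHR ''a'', 1))"
definition Tn :: "nat \<Rightarrow> tile set" where "Tn n = ctile ` {..<n}"
definition sig0 :: assembly where "sig0 = (\<lambda>x. if x = 0 then Some (ctile 0) else None)"
definition line :: "nat \<Rightarrow> assembly" where
  "line j = (\<lambda>x. if 0 \<le> x \<and> x \<le> int j then Some (ctile (nat x)) else None)"
definition Inv :: "nat \<Rightarrow> assembly \<Rightarrow> bool" where
  "Inv n \<alpha> \<longleftrightarrow> \<alpha> 0 = Some (ctile 0) \<and> (\<forall>x t. \<alpha> x = Some t \<longrightarrow> 0 \<le> x \<and> x < int n \<and> t = ctile (nat x))"

lemma ctile_inj: "ctile i = ctile k \<Longrightarrow> i = k"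
  by (simp add: ctile_def)

lemma strength_ctile: "1 \<le> strength (ctile i) (ctile k) \<Longrightarrow> k = Suc i"
proof -
  assume "1 \<le> strength (ctile i) (ctile k)"
  then have "east (ctile i) = west (ctile k)"
    by (simp add: strength_def split: if_splits)
  then have "length (replicate (Suc i) CHR ''a'') = length (replicate k CHR ''a'')"
    by (simp add: ctile_def east_def west_def)
  then show ?thesis by simp
qed

lemma strength_succ: "strength (ctile k) (ctile (Suc k)) = 1"
  by (simp add: strength_def ctile_def east_def west_def)

lemma T_sys: "1 \<le> n \<Longrightarrow> is_system (Tn n) sig0 1"
  unfolding is_system_def Tn_def sig0_def is_assembly_def is_interval_def stable_def
  by (auto simp: ran_def dom_def ctile_def split: if_splits)

lemma Inv_sig0: "1 \<le> n \<Longrightarrow> Inv n sig0"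
  by (auto simp: Inv_def sig0_def split: if_splits)

lemma T_inv_step:
  assumes I: "Inv n \<alpha>" and S: "step (Tn n) 1 \<alpha> \<beta>" shows "Inv n \<beta>"
proof -
  obtain x t where t: "t \<in> Tn n" and ax: "\<alpha> x = None" and b: "\<beta> = \<alpha>(x \<mapsto> t)"
    and asm: "is_assembly \<beta>" and st: "stable 1 \<beta>"
    using S unfolding step_def by blast
  obtain k where k: "k < n" "t = ctile k" using t unfolding Tn_def by auto
  have a0: "\<alpha> 0 = Some (ctile 0)" using I by (simp add: Inv_def)
  have x0: "x \<noteq> 0" using ax a0 by auto
  have d0: "0 \<in> dom \<beta>" "x \<in> dom \<beta>" using b a0 by auto
  have iv: "is_interval (dom \<beta>)" using asm by (simp add: is_assembly_def)
  have new: "0 \<le> x \<and> x < int n \<and> t = ctile (nat x)"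
  proof (cases "x > 0")
    case True
    have "0 \<le> x - 1" "x - 1 \<le> x" using True by auto
    then have "x - 1 \<in> dom \<beta>" using iv d0 unfolding is_interval_def by blast
    then have "\<alpha> (x - 1) \<noteq> None" using b by auto
    then obtain t' where t': "\<alpha> (x - 1) = Some t'" by auto
    then have t'': "t' = ctile (nat (x - 1))" using I unfolding Inv_def by blast
    have "1 \<le> strength (the (\<beta> (x - 1))) (the (\<beta> (x - 1 + 1)))"
      using st d0 \<open>x - 1 \<in> dom \<beta>\<close> unfolding stable_def by auto
    then have "1 \<le> strength (ctile (nat (x - 1))) (ctile k)" using b t' t'' k x0 by auto
    then have "k = Suc (nat (x - 1))" by (rule strength_ctile)
    moreover have "Suc (nat (x - 1)) = nat x" using True by (simp add: Suc_nat_eq_nat_zadd1)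
    ultimately show ?thesis using True k by simp
  next
    case False
    then have xn: "x < 0" using x0 by auto
    have "x \<le> x + 1" "x + 1 \<le> 0" using xn by auto
    then have "x + 1 \<in> dom \<beta>" using iv d0 unfolding is_interval_def by blast
    then have "\<alpha> (x + 1) \<noteq> None" using b by auto
    then obtain t' where t': "\<alpha> (x + 1) = Some t'" by auto
    then have "0 \<le> x + 1" using I unfolding Inv_def by blast
    then have x1: "x = -1" using xn by auto
    have "1 \<le> strength (the (\<beta> x)) (the (\<beta> (x + 1)))"
      using st d0 \<open>x + 1 \<in> dom \<beta>\<close> unfolding stable_def by auto
    then have "1 \<le> strength (ctile k) (ctile 0)" using b a0 x1 k by auto
    then have "0 = Suc k" by (rule strength_ctile)
    then show ?thesis by simp
  qed
  have B0: "\<beta> 0 = Some (ctile 0)" using b x0 a0 by simp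
  have B1: "0 \<le> y \<and> y < int n \<and> s = ctile (nat y)" if ys: "\<beta> y = Some s" for y s
  proof (cases "y = x")
    case True then show ?thesis using new ys b by simp
  next
    case False
    then have "\<alpha> y = Some s" using ys b by simp
    then show ?thesis using I unfolding Inv_def by blast
  qed
  show ?thesis unfolding Inv_def using B0 B1 by blast
qed

lemma T_inv_rt: "(step (Tn n) 1)\<^sup>*\<^sup>* \<alpha> \<beta> \<Longrightarrow> Inv n \<alpha> \<Longrightarrow> Inv n \<beta>"
  by (induction rule: rtranclp_induct) (auto intro: T_inv_step)

lemma T_inv_prod:
  assumes "1 \<le> n" "\<alpha> \<in> prodA (Tn n) sig0 1" shows "Inv n \<alpha>"
proof -
  have "produces (Tn n) 1 sig0 \<alpha>" using assms by (simp add: prodA_def)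
  then consider "(step (Tn n) 1)\<^sup>*\<^sup>* sig0 \<alpha>"
    | f where "f 0 = sig0" "\<forall>i. step (Tn n) 1 (f i) (f (Suc i))" "seq_limit f \<alpha>"
    unfolding produces_def by blast
  then show ?thesis
  proof cases
    case 1 then show ?thesis using T_inv_rt Inv_sig0 assms by blast
  next
    case 2
    have fi: "Inv n (f i)" for i
      by (induction i) (use 2 Inv_sig0 assms T_inv_step in auto)
    have lim: "\<And>x i. f i x \<noteq> None \<Longrightarrow> \<alpha> x = f i x" using 2(3) unfolding seq_limit_def by blast
    have lim2: "\<And>x. \<alpha> x \<noteq> None \<Longrightarrow> \<exists>i. f i x \<noteq> None" using 2(3) unfolding seq_limit_def by auto
    have A0: "\<alpha> 0 = Some (ctile 0)" using lim[of 0 0] 2(1) by (simp add: sig0_def)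
    have A1: "0 \<le> x \<and> x < int n \<and> t = ctile (nat x)" if at: "\<alpha> x = Some t" for x t
    proof -
      obtain i where "f i x \<noteq> None" using lim2 at by blast
      then have "f i x = Some t" using lim at by metis
      then show ?thesis using fi[of i] unfolding Inv_def by blast
    qed
    show ?thesis unfolding Inv_def using A0 A1 by blast
  qed
qed

lemma line_step: "Suc j < n \<Longrightarrow> step (Tn n) 1 (line j) (line (Suc j))"
  unfolding step_def
proof (intro exI conjI)
  assume j: "Suc j < n"
  show "ctile (Suc j) \<in> Tn n" using j by (simp add: Tn_def)
  show "line j (int (Suc j)) = None" by (simp add: line_def)
  show "line (Suc j) = (line j)(int (Suc j) \<mapsto> ctile (Suc j))"
  proof (rule ext)
    fix x show "line (Suc j) x = ((line j)(int (Suc j) \<mapsto> ctile (Suc j))) x"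
    proof (cases "x = int (Suc j)")
      case True
      have "nat (1 + int j) = Suc j" by (simp add: nat_add_distrib)
      then show ?thesis using True by (simp add: line_def)
    next
      case False then show ?thesis by (simp add: line_def)
    qed
  qed
  show "is_assembly (line (Suc j))"
    unfolding is_assembly_def is_interval_def line_def dom_def
    by (auto intro!: exI[of _ 0] simp: ctile_def)
  show "stable 1 (line (Suc j))"
    unfolding stable_def
  proof (intro allI impI)
    fix x assume H: "x \<in> dom (line (Suc j))" "x + 1 \<in> dom (line (Suc j))"
    then have x0: "0 \<le> x" by (auto simp: line_def split: if_splits)
    have "the (line (Suc j) x) = ctile (nat x)" using H by (auto simp: line_def split: if_splits)
    moreover have "the (line (Suc j) (x + 1)) = ctile (Suc (nat x))"
      using H x0 by (auto simp: line_def nat_add_distrib split: if_splits)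
    ultimately show "1 \<le> strength (the (line (Suc j) x)) (the (line (Suc j) (x + 1)))"
      using strength_succ by simp
  qed
qed

lemma line_rt: "j < n \<Longrightarrow> (step (Tn n) 1)\<^sup>*\<^sup>* sig0 (line j)"
proof (induction j)
  case 0
  have "line 0 = sig0" by (rule ext) (auto simp: line_def sig0_def)
  then show ?case by simp
next
  case (Suc j)
  then show ?case using line_step by (meson Suc_lessD rtranclp.rtrancl_into_rtrancl)
qed

lemma line_prod: "j < n \<Longrightarrow> line j \<in> prodA (Tn n) sig0 1"
  using line_rt by (simp add: prodA_def produces_def)



lemma U_rt:
  assumes "(step U \<tau>')\<^sup>*\<^sup>* \<sigma>' \<gamma>" "is_system U \<sigma>' \<tau>'"
  shows "is_assembly \<gamma> \<and> stable \<tau>' \<gamma> \<and> ran \<gamma> \<subseteq> U \<and> (\<forall>x. \<sigma>' x \<noteq> None \<longrightarrow> \<gamma> x = \<sigma>' x)"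
  using assms(1)
proof (induction rule: rtranclp_induct)
  case base
  then show ?case using assms(2) by (simp add: is_system_def)
next
  case (step y z)
  obtain x t where t: "t \<in> U" "y x = None" "z = y(x \<mapsto> t)" "is_assembly z" "stable \<tau>' z"
    using step(2) unfolding step_def by blast
  have "ran z \<subseteq> U" using t step(3) by (simp add: ran_map_upd)
  moreover have "\<forall>w. \<sigma>' w \<noteq> None \<longrightarrow> z w = \<sigma>' w" using step(3) t by auto
  ultimately show ?case using t by blast
qed

lemma seq_rt: "\<forall>i. r (f i) (f (Suc i)) \<Longrightarrow> r\<^sup>*\<^sup>* (f 0) (f k)"
  by (induction k) (auto intro: rtranclp.rtrancl_into_rtrancl)

lemma U_prod:
  assumes "produces U \<tau>' \<sigma>' \<alpha>" "\<alpha> p \<noteq> None"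
  shows "\<exists>\<gamma>. (step U \<tau>')\<^sup>*\<^sup>* \<sigma>' \<gamma> \<and> \<gamma> p = \<alpha> p"
proof -
  consider "(step U \<tau>')\<^sup>*\<^sup>* \<sigma>' \<alpha>"
    | f where "f 0 = \<sigma>'" "\<forall>i. step U \<tau>' (f i) (f (Suc i))" "seq_limit f \<alpha>"
    using assms(1) unfolding produces_def by blast
  then show ?thesis
  proof cases
    case 1 then show ?thesis by blast
  next
    case 2
    have l1: "\<alpha> p = None \<longleftrightarrow> (\<forall>i. f i p = None)" using 2(3) unfolding seq_limit_def by blast
    have l2: "\<forall>i. f i p \<noteq> None \<longrightarrow> \<alpha> p = f i p" using 2(3) unfolding seq_limit_def by blast
    obtain i where fi: "f i p \<noteq> None" using l1 assms(2) by blast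
    have ap: "\<alpha> p = f i p" using l2 fi by blast
    have "(step U \<tau>')\<^sup>*\<^sup>* \<sigma>' (f i)" using seq_rt[of "step U \<tau>'" f i, OF 2(2)] 2(1) by simp
    then show ?thesis using ap by (intro exI[of _ "f i"]) simp
  qed
qed

lemma U_prod_sub:
  assumes "produces U \<tau>' \<sigma>' \<alpha>" "is_system U \<sigma>' \<tau>'" "\<sigma>' x \<noteq> None"
  shows "\<alpha> x = \<sigma>' x"
proof -
  consider "(step U \<tau>')\<^sup>*\<^sup>* \<sigma>' \<alpha>"
    | f where "f 0 = \<sigma>'" "\<forall>i. step U \<tau>' (f i) (f (Suc i))" "seq_limit f \<alpha>"
    using assms(1) unfolding produces_def by blast
  then show ?thesis
  proof cases
    case 1 then show ?thesis using U_rt[OF 1 assms(2)] assms(3) by blast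
  next
    case 2
    have l2: "\<forall>i. f i x \<noteq> None \<longrightarrow> \<alpha> x = f i x" using 2(3) unfolding seq_limit_def by blast
    have "f 0 x \<noteq> None" using 2(1) assms(3) by simp
    then have "\<alpha> x = f 0 x" using l2 by blast
    then show ?thesis using 2(1) by simp
  qed
qed



lemma mblock_at:
  assumes "0 < m"
  shows "mblock m \<alpha> (y div int m) (nat (y mod int m)) = \<alpha> y"
proof -
  have "nat (y mod int m) < m" using assms by (simp add: nat_less_iff)
  moreover have "int m * (y div int m) + int (nat (y mod int m)) = y" using assms by simp
  ultimately show ?thesis by (simp add: mblock_def)
qed

lemma mblock_ne:
  assumes "0 < m" "\<alpha> y \<noteq> None" shows "mblock m \<alpha> (y div int m) \<noteq> Map.empty"
  using mblock_at[OF assms(1), of \<alpha> y] assms(2) by (metis)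

lemma L1:
  assumes m: "0 < m" and mc: "maps_cleanly m R \<alpha>" and d: "dom (Rstar m R \<alpha>) = {0}"
  shows "R Map.empty = None \<and> (\<forall>x. mblock m \<alpha> x \<noteq> Map.empty \<longrightarrow> x \<in> {-1, 0, 1})"
proof -
  have E: "R Map.empty = None"
  proof (rule ccontr)
    assume RE: "R Map.empty \<noteq> None"
    have ne: "mblock m \<alpha> x \<noteq> Map.empty" if x0: "x \<noteq> 0" for x
    proof
      assume "mblock m \<alpha> x = Map.empty"
      then have "Rstar m R \<alpha> x \<noteq> None" using RE by (simp add: Rstar_def)
      then have "x \<in> dom (Rstar m R \<alpha>)" by (simp add: domIff)
      then show False using d x0 by simp
    qed
    show False using mc unfolding maps_cleanly_def
    proof
      assume H: "\<forall>x. mblock m \<alpha> x \<noteq> Map.empty \<longrightarrow> (\<exists>u\<in>{-1, 0, 1}. x + u \<in> dom (Rstar m R \<alpha>))"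
      have n3: "mblock m \<alpha> 3 \<noteq> Map.empty" by (rule ne) simp
      have "\<exists>u\<in>{-1, 0, 1}. 3 + u \<in> dom (Rstar m R \<alpha>)" using H n3 by blast
      then show False using d by auto
    next
      assume H: "\<forall>x y. mblock m \<alpha> x \<noteq> Map.empty \<longrightarrow> mblock m \<alpha> y \<noteq> Map.empty \<longrightarrow> x = y"
      have "(1::int) = 2" using H[rule_format, of 1 2] ne[of 1] ne[of 2] by simp
      then show False by simp
    qed
  qed
  have b0: "mblock m \<alpha> 0 \<noteq> Map.empty"
  proof
    assume "mblock m \<alpha> 0 = Map.empty"
    then have "Rstar m R \<alpha> 0 = None" using E by (simp add: Rstar_def)
    then have "0 \<notin> dom (Rstar m R \<alpha>)" by (simp add: domIff)
    then show False using d by simp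
  qed
  have "\<forall>x. mblock m \<alpha> x \<noteq> Map.empty \<longrightarrow> x \<in> {-1, 0, 1}"
    using mc unfolding maps_cleanly_def
  proof
    assume H: "\<forall>x. mblock m \<alpha> x \<noteq> Map.empty \<longrightarrow> (\<exists>u\<in>{-1, 0, 1}. x + u \<in> dom (Rstar m R \<alpha>))"
    show ?thesis
    proof (intro allI impI)
      fix x assume "mblock m \<alpha> x \<noteq> Map.empty"
      then obtain u where "u \<in> {-1, 0, 1}" "x + u \<in> dom (Rstar m R \<alpha>)" using H by blast
      then show "x \<in> {-1, 0, 1}" using d by auto
    qed
  next
    assume H: "\<forall>x y. mblock m \<alpha> x \<noteq> Map.empty \<longrightarrow> mblock m \<alpha> y \<noteq> Map.empty \<longrightarrow> x = y"
    show ?thesis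
    proof (intro allI impI)
      fix x assume "mblock m \<alpha> x \<noteq> Map.empty"
      then have "x = 0" using H[rule_format, of x 0] b0 by simp
      then show "x \<in> {-1, 0, 1}" by simp
    qed
  qed
  then show ?thesis using E by blast
qed



lemma no_sim:
  assumes finU: "finite U" and sysU: "is_system U \<sigma>' \<tau>'"
    and sim: "simulates U \<sigma>' \<tau>' (Tn n) sig0 1 m R" and nU: "n = card U + 4"
  shows False
proof -
  have m: "0 < m" using sim unfolding simulates_def by (elim conjE) assumption
  have onto: "Rstar m R ` prodA U \<sigma>' \<tau>' = prodA (Tn n) sig0 1" using sim unfolding simulates_def by (elim conjE) assumption
  have clean: "\<forall>\<alpha>'\<in>prodA U \<sigma>' \<tau>'. maps_cleanly m R \<alpha>'" using sim unfolding simulates_def by (elim conjE) assumption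
  have n1: "1 \<le> n" using nU by simp
  have invR: "Inv n (Rstar m R \<beta>)" if "\<beta> \<in> prodA U \<sigma>' \<tau>'" for \<beta>
    using T_inv_prod[OF n1] onto that by blast
  have domR: "x \<in> dom (Rstar m R \<beta>) \<Longrightarrow> 0 \<le> x \<and> x < int n" if "\<beta> \<in> prodA U \<sigma>' \<tau>'" for \<beta> x
    using invR[OF that] unfolding Inv_def by blast
  have "sig0 \<in> prodA (Tn n) sig0 1" by (simp add: prodA_def produces_def)
  then obtain \<alpha>' where a1: "\<alpha>' \<in> prodA U \<sigma>' \<tau>'" and a2: "Rstar m R \<alpha>' = sig0"
    using onto by (metis imageE)
  have "dom (Rstar m R \<alpha>') = {0}" using a2 by (auto simp: sig0_def split: if_splits)
  then have L: "R Map.empty = None \<and> (\<forall>x. mblock m \<alpha>' x \<noteq> Map.empty \<longrightarrow> x \<in> {-1, 0, 1})"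
    using L1[OF m] clean a1 by blast
  have E: "R Map.empty = None" using L by blast
  have a'small: "y < 2 * int m" if "\<alpha>' y \<noteq> None" for y
  proof -
    have "y div int m \<le> 1" using L mblock_ne[of m \<alpha>' y, OF m that] by auto
    moreover have "y = int m * (y div int m) + y mod int m" by simp
    moreover have "y mod int m < int m" using m by simp
    moreover have "int m * (y div int m) \<le> int m * 1"
      by (rule mult_left_mono) (use \<open>y div int m \<le> 1\<close> in auto)
    ultimately have "y < int m * 1 + int m" by linarith
    then show ?thesis by simp
  qed
  have s_sub: "\<alpha> x = \<sigma>' x" if "\<alpha> \<in> prodA U \<sigma>' \<tau>'" "\<sigma>' x \<noteq> None" for \<alpha> x
    using U_prod_sub[OF _ sysU that(2)] that(1) by (simp add: prodA_def)
  have ssmall: "y < 2 * int m" if "\<sigma>' y \<noteq> None" for y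
    using a'small s_sub[OF a1 that] that by auto
  have finS: "finite (dom \<sigma>')" and neS: "dom \<sigma>' \<noteq> {}" and ivS: "is_interval (dom \<sigma>')"
    and stS: "stable \<tau>' \<sigma>'"
    using sysU by (auto simp: is_system_def is_assembly_def)
  define b where "b = Max (dom \<sigma>')"
  have bin: "\<sigma>' b \<noteq> None" using Max_in[OF finS neS] b_def by auto
  have bmax: "\<sigma>' x = None" if "x > b" for x
    using Max_ge[OF finS, of x] b_def that by force
  have bsmall: "b < 2 * int m" using ssmall bin by blast
  have "line (n - 1) \<in> prodA (Tn n) sig0 1" using line_prod n1 by simp
  then obtain \<alpha>'' where b1: "\<alpha>'' \<in> prodA U \<sigma>' \<tau>'" and b2: "Rstar m R \<alpha>'' = line (n - 1)"
    using onto by (metis imageE)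
  have "R (mblock m \<alpha>'' (int (n - 1))) \<noteq> None"
    using b2 unfolding Rstar_def by (metis line_def option.distinct(1) order_refl of_nat_0_le_iff)
  then have "mblock m \<alpha>'' (int (n - 1)) \<noteq> Map.empty" using E by auto
  then have "\<exists>i0. mblock m \<alpha>'' (int (n - 1)) i0 \<noteq> None"
    by (metis (mono_tags) ext)
  then obtain i0 where "mblock m \<alpha>'' (int (n - 1)) i0 \<noteq> None" by blast
  then have i0: "i0 < m" "\<alpha>'' (int m * int (n - 1) + int i0) \<noteq> None"
    by (auto simp: mblock_def split: if_splits)
  define p where "p = int m * int (n - 1) + int i0"
  have pbig: "p \<ge> int m * int (n - 1)" unfolding p_def by simp
  obtain \<gamma> where g1: "(step U \<tau>')\<^sup>*\<^sup>* \<sigma>' \<gamma>" and g2: "\<gamma> p \<noteq> None"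
    using U_prod[of U \<tau>' \<sigma>' \<alpha>'' p] b1 i0 p_def by (auto simp: prodA_def)
  have gasm: "is_assembly \<gamma>" and gst: "stable \<tau>' \<gamma>" and gran: "ran \<gamma> \<subseteq> U"
    and gsub: "\<And>x. \<sigma>' x \<noteq> None \<Longrightarrow> \<gamma> x = \<sigma>' x"
    using U_rt[OF g1 sysU] by auto
  have gb: "\<gamma> b \<noteq> None" using gsub bin by auto
  have gdef: "\<gamma> x \<noteq> None" if "b \<le> x" "x \<le> p" for x
    using gasm gb g2 that unfolding is_assembly_def is_interval_def by blast
  \<comment> \<open>pigeonhole\<close>
  define A where "A = {2 * int m .. p}"
  have m1: "1 \<le> m" using m by simp
  then have "1 * (card U + 1) \<le> m * (card U + 1)" by (rule mult_le_mono1)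
  then have N0: "card U + 1 \<le> m * (card U + 1)" by (simp only: mult_1)
  have N2: "m * (n - 1) = 2 * m + m * (card U + 1)" using nU by (simp add: algebra_simps)
  have N1: "2 * m + card U + 1 \<le> m * (n - 1)" using N0 N2 by linarith
  have N3: "int (2 * m + card U + 1) \<le> int (m * (n - 1))" using N1 by (simp only: of_nat_le_iff)
  have N4: "int (2 * m + card U + 1) = 2 * int m + int (card U) + 1" by simp
  have N5: "int (m * (n - 1)) = int m * int (n - 1)" by simp
  have pb: "p \<ge> 2 * int m + int (card U) + 1" using pbig N3 N4 N5 by linarith
  have cardA: "card A = nat (p - 2 * int m + 1)" unfolding A_def by simp
  have cA: "card U < card A" using cardA pb by linarith
  define g where "g x = the (\<gamma> x)" for x
  have Ab: "b \<le> x \<and> x \<le> p" if "x \<in> A" for x using that bsmall unfolding A_def by auto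
  have gA: "g ` A \<subseteq> U"
  proof
    fix y assume "y \<in> g ` A"
    then obtain x where x: "x \<in> A" "y = g x" by auto
    then have "\<gamma> x = Some y" using gdef Ab unfolding g_def by auto
    then show "y \<in> U" using gran by (auto simp: ran_def)
  qed
  have "\<not> inj_on g A"
    using card_inj_on_le[OF _ gA finU] cA by linarith
  then obtain x y where xy: "x \<in> A" "y \<in> A" "x \<noteq> y" "g x = g y"
    unfolding inj_on_def by blast
  have gxy: "\<gamma> x = \<gamma> y" using xy gdef Ab unfolding g_def by (metis option.collapse)
  obtain i j where ij: "i \<in> A" "j \<in> A" "i < j" "\<gamma> i = \<gamma> j"
  proof (cases "x < y")
    case True then show ?thesis using that xy gxy by blast
  next
    case False then show ?thesis using that[of y x] xy gxy by auto
  qed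
  have ib: "b < i" "j \<le> p" using ij bsmall unfolding A_def by auto
  define d where "d = j - i"
  have d0: "0 < d" using ij d_def by simp
  define \<delta> where "\<delta> x = (if x \<le> b then \<sigma>' x else if x \<le> j then \<gamma> x
      else \<gamma> (i + int (nat (x - i) mod nat d)))" for x
  have dle: "x \<le> b \<Longrightarrow> \<delta> x = \<sigma>' x" for x by (simp add: \<delta>_def)
  have dlt: "b < x \<Longrightarrow> x \<le> j \<Longrightarrow> \<delta> x = \<gamma> x" for x by (simp add: \<delta>_def)
  have dper: "\<delta> x = \<gamma> (i + int (nat (x - i) mod nat d))" if "i \<le> x" for x
  proof (cases "x \<le> j")
    case True
    show ?thesis
    proof (cases "x = j")
      case True
      then have "nat (x - i) mod nat d = 0" using d_def by simp
      then show ?thesis using True dlt ib ij by simp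
    next
      case False
      then have "nat (x - i) < nat d" using \<open>x \<le> j\<close> that d_def by simp
      then have "int (nat (x - i) mod nat d) = x - i" using that by simp
      then show ?thesis using dlt ib that \<open>x \<le> j\<close> by simp
    qed
  next
    case False
    then have "\<not> x \<le> b" using ib ij by linarith
    then show ?thesis using False by (simp add: \<delta>_def)
  qed
  have dsome: "\<delta> x \<noteq> None \<and> the (\<delta> x) \<in> U" if "b < x" for x
  proof -
    have "\<gamma> y \<noteq> None \<Longrightarrow> the (\<gamma> y) \<in> U" for y using gran by (auto simp: ran_def)
    moreover have "\<exists>y. b \<le> y \<and> y \<le> p \<and> \<delta> x = \<gamma> y"
    proof (cases "x \<le> j")
      case True then show ?thesis using dlt that ib by (intro exI[of _ x]) auto
    next
      case False
      have "nat (x - i) mod nat d < nat d" using d0 by simp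
      then have "i + int (nat (x - i) mod nat d) < j" using d_def by linarith
      then show ?thesis using dper[of x] False ib ij
        by (intro exI[of _ "i + int (nat (x - i) mod nat d)"]) auto
    qed
    ultimately show ?thesis using gdef by metis
  qed
  have gstab: "\<tau>' \<le> strength (the (\<gamma> x)) (the (\<gamma> (x + 1)))" if "b \<le> x" "x + 1 \<le> p" for x
  proof -
    have "x \<in> dom \<gamma>" using gdef[of x] that by (simp add: domIff)
    moreover have "x + 1 \<in> dom \<gamma>" using gdef[of "x + 1"] that by (simp add: domIff)
    ultimately show ?thesis using gst unfolding stable_def by blast
  qed
  have dstab: "\<tau>' \<le> strength (the (\<delta> x)) (the (\<delta> (x + 1)))"
    if "\<delta> x \<noteq> None" "\<delta> (x + 1) \<noteq> None" for x
  proof -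
    consider "x + 1 \<le> b" | "x = b" | "b < x \<and> x < i" | "i \<le> x" by linarith
    then show ?thesis
    proof cases
      case 1 then show ?thesis using that stS dle unfolding stable_def by auto
    next
      case 2 then show ?thesis using gstab[of b] dle dlt[of "b + 1"] gsub[OF bin] ib ij by auto
    next
      case 3 then show ?thesis using gstab[of x] dlt[of x] dlt[of "x + 1"] ib ij by auto
    next
      case 4
      define r where "r = nat (x - i) mod nat d"
      have rd: "r < nat d" using d0 r_def by simp
      have e1: "\<delta> x = \<gamma> (i + int r)" using dper[OF 4] r_def by simp
      have "nat (x + 1 - i) = Suc (nat (x - i))" using 4 by simp
      then have "nat (x + 1 - i) mod nat d = (if Suc r = nat d then 0 else Suc r)"
        using r_def by (simp add: mod_Suc)
      then have M: "nat (x + 1 - i) mod nat d = (if Suc r = nat d then 0 else Suc r)" .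
      have D1: "\<delta> (x + 1) = \<gamma> (i + int (nat (x + 1 - i) mod nat d))" using dper[of "x + 1"] 4 by simp
      have e2: "\<delta> (x + 1) = \<gamma> (i + int r + 1)"
      proof (cases "Suc r = nat d")
        case True
        have "int (Suc r) = d" using True d0 by simp
        then have "i + int r + 1 = j" using d_def by simp
        moreover have "\<delta> (x + 1) = \<gamma> i" using D1 M True by simp
        ultimately show ?thesis using ij by simp
      next
        case False
        then have "\<delta> (x + 1) = \<gamma> (i + int (Suc r))" using D1 M by simp
        then show ?thesis by (simp add: algebra_simps)
      qed
      have "i + int r + 1 \<le> j" using rd d_def by linarith
      then show ?thesis using e1 e2 gstab[of "i + int r"] ib by auto
    qed
  qed
  define f where "f k = (\<lambda>x. if x \<le> b + int k then \<delta> x else None)" for k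
  have f0: "f 0 = \<sigma>'" by (rule ext) (simp add: f_def dle bmax)
  have fdom: "y \<in> dom (f k') \<longleftrightarrow> y \<le> b + int k' \<and> \<delta> y \<noteq> None" for y k'
    by (simp add: f_def domIff)
  have fval: "y \<le> b + int k' \<Longrightarrow> f k' y = \<delta> y" for y k' by (simp add: f_def)
  have fstep: "step U \<tau>' (f k) (f (Suc k))" for k
    unfolding step_def
  proof (intro exI conjI)
    define x0 where "x0 = b + int k + 1"
    have x0: "\<delta> x0 \<noteq> None" "the (\<delta> x0) \<in> U" using dsome[of x0] x0_def by auto
    show "the (\<delta> x0) \<in> U" by (fact x0(2))
    show "f k x0 = None" by (simp add: f_def x0_def)
    show "f (Suc k) = (f k)(x0 \<mapsto> the (\<delta> x0))"
    proof (rule ext)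
      fix y
      show "f (Suc k) y = ((f k)(x0 \<mapsto> the (\<delta> x0))) y"
      proof (cases "y = x0")
        case True
        then have "f (Suc k) y = \<delta> x0" using fval[of y "Suc k"] x0_def by simp
        then show ?thesis using True x0(1) by simp
      next
        case False
        have "(y \<le> b + int (Suc k)) = (y \<le> b + int k)" using False x0_def by auto
        then show ?thesis using False by (simp add: f_def)
      qed
    qed
    have fb: "f (Suc k) b = \<sigma>' b" using fval[of b "Suc k"] dle[of b] by simp
    show "is_assembly (f (Suc k))"
      unfolding is_assembly_def
    proof
      show "dom (f (Suc k)) \<noteq> {}" using fb bin by auto
      show "is_interval (dom (f (Suc k)))"
        unfolding is_interval_def
      proof (intro allI impI)
        fix x y z assume H: "x \<in> dom (f (Suc k))" "z \<in> dom (f (Suc k))" "x \<le> y" "y \<le> z"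
        have zb: "z \<le> b + int (Suc k)" using H(2) fdom by blast
        have dx: "\<delta> x \<noteq> None" using H(1) fdom by blast
        have dz: "\<delta> z \<noteq> None" using H(2) fdom by blast
        have "\<delta> y \<noteq> None"
        proof (cases "b < y")
          case True then show ?thesis using dsome[of y] by blast
        next
          case False
          then have yb: "y \<le> b" by simp
          have sx: "\<sigma>' x \<noteq> None" using dx dle[of x] yb H(3) by simp
          have "\<sigma>' y \<noteq> None"
          proof (cases "z \<le> b")
            case True
            then have "\<sigma>' z \<noteq> None" using dz dle[of z] by simp
            then show ?thesis using ivS sx H(3,4) unfolding is_interval_def by blast
          next
            case False
            then show ?thesis using ivS sx H(3) yb bin unfolding is_interval_def by blast
          qed
          then show ?thesis using dle[of y] yb by simp
        qed
        then show "y \<in> dom (f (Suc k))" using fdom H(4) zb by auto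
      qed
    qed
    show "stable \<tau>' (f (Suc k))"
      unfolding stable_def
    proof (intro allI impI)
      fix x assume H: "x \<in> dom (f (Suc k))" "x + 1 \<in> dom (f (Suc k))"
      then have h1: "x \<le> b + int (Suc k)" "\<delta> x \<noteq> None" "x + 1 \<le> b + int (Suc k)" "\<delta> (x + 1) \<noteq> None"
        using fdom by blast+
      then have "f (Suc k) x = \<delta> x" "f (Suc k) (x + 1) = \<delta> (x + 1)" using fval by blast+
      then show "\<tau>' \<le> strength (the (f (Suc k) x)) (the (f (Suc k) (x + 1)))" using dstab h1 by simp
    qed
  qed
  have lim: "seq_limit f \<delta>"
    unfolding seq_limit_def
  proof (rule allI, rule conjI)
    fix x
    show "(\<delta> x = None) = (\<forall>i. f i x = None)"
    proof
      assume "\<delta> x = None" then show "\<forall>i. f i x = None" by (simp add: f_def)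
    next
      assume "\<forall>i. f i x = None"
      then have "f (nat (x - b)) x = None" by blast
      then show "\<delta> x = None" by (simp add: f_def split: if_splits)
    qed
    show "\<forall>i. f i x \<noteq> None \<longrightarrow> \<delta> x = f i x" by (simp add: f_def)
  qed
  have dprod: "\<delta> \<in> prodA U \<sigma>' \<tau>'"
    unfolding prodA_def produces_def using f0 fstep lim by blast
  define X where "X = int n + 2 + \<bar>b\<bar>"
  have Xb: "b < int m * X" "b < int m * (X + 1)"
  proof -
    have X0: "0 \<le> X" "0 \<le> X + 1" using X_def by simp_all
    have m1': "1 \<le> int m" using m by simp
    have "1 * X \<le> int m * X" by (rule mult_right_mono[OF m1' X0(1)])
    moreover have "1 * (X + 1) \<le> int m * (X + 1)" by (rule mult_right_mono[OF m1' X0(2)])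
    ultimately have "X \<le> int m * X" "X + 1 \<le> int m * (X + 1)" by simp_all
    then show "b < int m * X" "b < int m * (X + 1)" using X_def by linarith+
  qed
  have bl: "mblock m \<delta> Y \<noteq> Map.empty" if "b < int m * Y" for Y
  proof
    assume "mblock m \<delta> Y = Map.empty"
    then have "mblock m \<delta> Y 0 = None" by simp
    moreover have "mblock m \<delta> Y 0 = \<delta> (int m * Y)" using m by (simp add: mblock_def)
    ultimately show False using dsome[OF that] by simp
  qed
  have blX: "mblock m \<delta> X \<noteq> Map.empty" using bl Xb(1) by blast
  have blX1: "mblock m \<delta> (X + 1) \<noteq> Map.empty" using bl Xb(2) by blast
  have "maps_cleanly m R \<delta>" using clean dprod by blast
  then show False
    unfolding maps_cleanly_def
  proof
    assume H: "\<forall>x. mblock m \<delta> x \<noteq> Map.empty \<longrightarrow> (\<exists>u\<in>{-1, 0, 1}. x + u \<in> dom (Rstar m R \<delta>))"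
    obtain u where u: "u \<in> {-1, 0, 1}" "X + u \<in> dom (Rstar m R \<delta>)" using H blX by blast
    have "X + u < int n" using domR[OF dprod u(2)] by blast
    moreover have "-1 \<le> u" using u(1) by auto
    moreover have "0 \<le> \<bar>b\<bar>" by simp
    ultimately show False using X_def by linarith
  next
    assume H: "\<forall>x y. mblock m \<delta> x \<noteq> Map.empty \<longrightarrow> mblock m \<delta> y \<noteq> Map.empty \<longrightarrow> x = y"
    have "X = X + 1" using H blX blX1 by blast
    then show False by simp
  qed
qed



theorem mainTheorem6:
  shows "\<not> (\<exists>(U :: tile set) (\<tau>' :: nat) (R :: system \<Rightarrow> nat \<times> (block \<rightharpoonup> tile))
              (S :: system \<Rightarrow> assembly).
            finite U
          \<and> computable_on valid_system enc_system (enc_rep U) R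
          \<and> computable_on valid_system enc_system enc_asm S
          \<and> (\<forall>T \<sigma> \<tau>. is_system T \<sigma> \<tau> \<longrightarrow>
                is_system U (S (T, \<sigma>, \<tau>)) \<tau>'
              \<and> simulates U (S (T, \<sigma>, \<tau>)) \<tau>' T \<sigma> \<tau>
                  (fst (R (T, \<sigma>, \<tau>))) (snd (R (T, \<sigma>, \<tau>)))))"
proof
  assume "\<exists>(U :: tile set) (\<tau>' :: nat) (R :: system \<Rightarrow> nat \<times> (block \<rightharpoonup> tile))
              (S :: system \<Rightarrow> assembly).
            finite U
          \<and> computable_on valid_system enc_system (enc_rep U) R
          \<and> computable_on valid_system enc_system enc_asm S
          \<and> (\<forall>T \<sigma> \<tau>. is_system T \<sigma> \<tau> \<longrightarrow>
                is_system U (S (T, \<sigma>, \<tau>)) \<tau>'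
              \<and> simulates U (S (T, \<sigma>, \<tau>)) \<tau>' T \<sigma> \<tau>
                  (fst (R (T, \<sigma>, \<tau>))) (snd (R (T, \<sigma>, \<tau>))))"
  then obtain U :: "tile set" and \<tau>' :: nat and R :: "system \<Rightarrow> nat \<times> (block \<rightharpoonup> tile)"
    and S :: "system \<Rightarrow> assembly"
    where finU: "finite U"
      and H: "\<forall>T \<sigma> \<tau>. is_system T \<sigma> \<tau> \<longrightarrow>
                is_system U (S (T, \<sigma>, \<tau>)) \<tau>'
              \<and> simulates U (S (T, \<sigma>, \<tau>)) \<tau>' T \<sigma> \<tau>
                  (fst (R (T, \<sigma>, \<tau>))) (snd (R (T, \<sigma>, \<tau>)))"
    by blast
  define n where "n = card U + 4"
  have sysT: "is_system (Tn n) sig0 1" using T_sys n_def by simp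
  have H1: "is_system U (S (Tn n, sig0, 1)) \<tau>'"
    and H2: "simulates U (S (Tn n, sig0, 1)) \<tau>' (Tn n) sig0 1
                  (fst (R (Tn n, sig0, 1))) (snd (R (Tn n, sig0, 1)))"
    using H sysT by blast+
  show False using no_sim[OF finU H1 H2 n_def] .
qed

end
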